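(* Let $\beta\in(0,1/2]$, $p\asymp d^{1-\beta}$ as $d\to\infty$, and suppose $\lim_{d\to\infty}\frac{r^2nh(\tau)}{\sqrt d}=0$. Then for the Rademacher prior, $\mathbf E_0[L^2_{\pi,r}(Z)]\to1$ as $d\to\infty$.
   Context: Model: for integers $n\ge2$, $d\ge1$ and a fixed baseline mean $\theta\in\mathbb R^d$, we observe independent vectors $X_i=\theta+\Delta\theta\,\mathbf 1\{i>\tau\}+\xi_i$, $i=1,\dots,n$, $\tau\in\{1,\dots,n-1\}$, with $\xi_i$ i.i.d. $\mathcal N(0,I_d)$. $Z=(Z_n^j(s))_{j\le d,s\le n-1}$ where $Z_n^j(s)$ is the $j$-th coordinate of $Z_n(s)=\sqrt{\frac{s(n-s)}n}\bigl(\frac1s\sum_{i=1}^sX_i-\frac1{n-s}\sum_{i=s+1}^nX_i\bigr)$. $h(\tau)=\frac\tau n(1-\frac\tau n)$. Rademacher prior: draw $m$ uniformly among $p$-element subsets of $\{1,\dots,d\}$ and independent uniform signs $\varepsilon_j\in\{\pm1\}$, and set $\Delta\theta_j=\frac r{\sqrt p}\varepsilon_j$ for $j\in m$, $\Delta\theta_j=0$ otherwise. $\mathbf P_{\pi,r}$ is the resulting mixture law of $Z$, $\mathbf P_0$ its law under $\Delta\theta=0$, $L_{\pi,r}=d\mathbf P_{\pi,r}/d\mathbf P_0$. All quantities ($n,p,r,\tau$) are indexed by $d\to\infty$; $a\asymp b$ means $a/b$ is bounded above and below by positive constants. *)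

theory Defs
  imports "HOL-Probability.Probability"
begin

definition obs_law ::
  "nat \<Rightarrow> nat \<Rightarrow> nat \<Rightarrow> (nat \<Rightarrow> real) \<Rightarrow> (nat \<Rightarrow> real) \<Rightarrow> (nat \<times> nat \<Rightarrow> real) measure" where
  "obs_law d n \<tau> \<theta> \<Delta> =
     PiM ({1..d} \<times> {1..n})
       (\<lambda>(j,i). density lborel (normal_density (\<theta> j + (if i > \<tau> then \<Delta> j else 0)) 1))"

definition Zstat :: "nat \<Rightarrow> nat \<Rightarrow> (nat \<times> nat \<Rightarrow> real) \<Rightarrow> (nat \<times> nat \<Rightarrow> real)" where
  "Zstat d n x = restrict (\<lambda>(j,s).
      sqrt (real s * real (n - s) / real n) *
        ((\<Sum>i=1..s. x (j,i)) / real s - (\<Sum>i=s+1..n. x (j,i)) / real (n - s)))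
      ({1..d} \<times> {1..n-1})"

definition Z_law ::
  "nat \<Rightarrow> nat \<Rightarrow> nat \<Rightarrow> (nat \<Rightarrow> real) \<Rightarrow> (nat \<Rightarrow> real) \<Rightarrow> (nat \<times> nat \<Rightarrow> real) measure" where
  "Z_law d n \<tau> \<theta> \<Delta> =
     distr (obs_law d n \<tau> \<theta> \<Delta>) (PiM ({1..d} \<times> {1..n-1}) (\<lambda>_. lborel)) (Zstat d n)"

definition rad_prior :: "nat \<Rightarrow> nat \<Rightarrow> real \<Rightarrow> (nat \<Rightarrow> real) pmf" where
  "rad_prior d p r =
     map_pmf (\<lambda>(m, \<epsilon>). \<lambda>j. if j \<in> m then r / sqrt (real p) * \<epsilon> j else 0)
       (pmf_of_set {(m, \<epsilon>). m \<subseteq> {1..d} \<and> card m = p \<and> \<epsilon> \<in> PiE m (\<lambda>_. {-1, 1::real})})"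

definition mix_law ::
  "nat \<Rightarrow> nat \<Rightarrow> nat \<Rightarrow> (nat \<Rightarrow> real) \<Rightarrow> nat \<Rightarrow> real \<Rightarrow> (nat \<times> nat \<Rightarrow> real) measure" where
  "mix_law d n \<tau> \<theta> p r = measure_pmf (rad_prior d p r) \<bind> (\<lambda>\<Delta>. Z_law d n \<tau> \<theta> \<Delta>)"

definition null_law ::
  "nat \<Rightarrow> nat \<Rightarrow> nat \<Rightarrow> (nat \<Rightarrow> real) \<Rightarrow> (nat \<times> nat \<Rightarrow> real) measure" where
  "null_law d n \<tau> \<theta> = Z_law d n \<tau> \<theta> (\<lambda>_. 0)"

definition lik_ratio ::
  "nat \<Rightarrow> nat \<Rightarrow> nat \<Rightarrow> (nat \<Rightarrow> real) \<Rightarrow> nat \<Rightarrow> real \<Rightarrow> (nat \<times> nat \<Rightarrow> real) \<Rightarrow> ennreal" where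
  "lik_ratio d n \<tau> \<theta> p r = RN_deriv (null_law d n \<tau> \<theta>) (mix_law d n \<tau> \<theta> p r)"

definition chi2_moment ::
  "nat \<Rightarrow> nat \<Rightarrow> nat \<Rightarrow> (nat \<Rightarrow> real) \<Rightarrow> nat \<Rightarrow> real \<Rightarrow> ennreal" where
  "chi2_moment d n \<tau> \<theta> p r =
     (\<integral>\<^sup>+ z. (lik_ratio d n \<tau> \<theta> p r z)\<^sup>2 \<partial>null_law d n \<tau> \<theta>)"

definition hfun :: "nat \<Rightarrow> nat \<Rightarrow> real" where
  "hfun n \<tau> = (real \<tau> / real n) * (1 - real \<tau> / real n)"

end

theory Submission
  imports Defs
begin


lemma PiM_density_prod:
  assumes I: "finite I" and N: "\<And>i. prob_space (N i)"
    and g[measurable]: "\<And>i. g i \<in> borel_measurable (N i)"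
    and D: "\<And>i. prob_space (density (N i) (g i))"
  shows "PiM I (\<lambda>i. density (N i) (g i)) = density (PiM I N) (\<lambda>x. \<Prod>i\<in>I. g i (x i))"
proof -
  interpret PN: product_prob_space N by (intro product_prob_spaceI N)
  interpret PD: product_prob_space "\<lambda>i. density (N i) (g i)" by (intro product_prob_spaceI D)
  have meas: "(\<lambda>x. \<Prod>i\<in>I. g i (x i)) \<in> borel_measurable (PiM I N)"
    by measurable
  show ?thesis
  proof (rule PD.PiM_eqI[symmetric])
    show "finite I" by fact
    show "sets (density (Pi\<^sub>M I N) (\<lambda>x. \<Prod>i\<in>I. g i (x i))) = sets (Pi\<^sub>M I (\<lambda>i. density (N i) (g i)))"
      unfolding sets_density by (intro sets_PiM_cong refl) simp
    fix A assume A: "\<And>i. i \<in> I \<Longrightarrow> A i \<in> sets (density (N i) (g i))"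
    hence A': "\<And>i. i \<in> I \<Longrightarrow> A i \<in> sets (N i)" by simp
    have "PiE I A \<in> sets (PiM I N)" using A' by (simp add: sets_PiM_I_finite I)
    hence "emeasure (density (Pi\<^sub>M I N) (\<lambda>x. \<Prod>i\<in>I. g i (x i))) (PiE I A)
        = (\<integral>\<^sup>+x. (\<Prod>i\<in>I. g i (x i)) * indicator (PiE I A) x \<partial>PiM I N)"
      using meas by (simp add: emeasure_density)
    also have "\<dots> = (\<integral>\<^sup>+x. (\<Prod>i\<in>I. g i (x i) * indicator (A i) (x i)) \<partial>PiM I N)"
    proof (rule nn_integral_cong)
      fix x assume "x \<in> space (PiM I N)"
      hence ext: "x \<in> extensional I" by (simp add: space_PiM PiE_def)
      show "(\<Prod>i\<in>I. g i (x i)) * indicator (PiE I A) x = (\<Prod>i\<in>I. g i (x i) * indicator (A i) (x i))"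
        using ext by (auto simp: prod.distrib indicator_def PiE_def Pi_def I)
    qed
    also have "\<dots> = (\<Prod>i\<in>I. \<integral>\<^sup>+y. g i y * indicator (A i) y \<partial>N i)"
      using A' by (intro PN.product_nn_integral_prod I) auto
    also have "\<dots> = (\<Prod>i\<in>I. emeasure (density (N i) (g i)) (A i))"
      using A' by (intro prod.cong refl) (simp add: emeasure_density)
    finally show "emeasure (density (Pi\<^sub>M I N) (\<lambda>x. \<Prod>i\<in>I. g i (x i))) (PiE I A) = (\<Prod>i\<in>I. emeasure (density (N i) (g i)) (A i))" .
  qed
qed



lemma normal_ratio:
  "normal_density m 1 x = normal_density t 1 x * exp ((m-t)*(x-t) - (m-t)^2/2)"
proof -
  have "- ((x - m)\<^sup>2 / 2) = - ((x - t)\<^sup>2 / 2) + ((m-t)*(x-t) - (m-t)^2/2)"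
    by (simp add: power2_eq_square field_simps)
  thus ?thesis unfolding normal_density_def by (simp add: mult_exp_exp)
qed

lemma prob_normal: "prob_space (density lborel (normal_density m 1))"
  by (rule prob_space_normal_density) simp

lemma normal_shift:
  "distr (density lborel (normal_density \<mu> 1)) lborel (\<lambda>x. x + c) = density lborel (normal_density (\<mu> + c) 1)"
proof -
  interpret prob_space "density lborel (normal_density \<mu> 1)" by (rule prob_normal)
  have X: "distributed (density lborel (normal_density \<mu> 1)) lborel (\<lambda>x. x) (normal_density \<mu> 1)"
    by (simp add: distributed_def distr_id2)
  have "distributed (density lborel (normal_density \<mu> 1)) lborel (\<lambda>x. c + 1 * x) (normal_density (c + 1 * \<mu>) (\<bar>1\<bar> * 1))"
    by (rule normal_density_affine[OF X]) auto
  thus ?thesis by (simp add: distributed_def add.commute)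
qed

lemma Zstat_meas:
  assumes M: "\<And>k. sets (M k) = sets lborel"
  shows "Zstat d n \<in> measurable (PiM ({1..d}\<times>{1..n}) M) (PiM ({1..d}\<times>{1..n-1}) (\<lambda>_. lborel))"
  unfolding Zstat_def
proof (rule measurable_restrict)
  fix k assume k: "k \<in> {1..d}\<times>{1..n-1}"
  obtain j s where ks: "k = (j,s)" by (cases k)
  with k have sub1: "\<And>i. i \<in> {1..s} \<Longrightarrow> (j,i) \<in> {1..d}\<times>{1..n}" and sub2: "\<And>i. i \<in> {s+1..n} \<Longrightarrow> (j,i) \<in> {1..d}\<times>{1..n}"
    by auto
  have m1: "(\<lambda>x. x (j,i)) \<in> borel_measurable (PiM ({1..d}\<times>{1..n}) M)" if "(j,i) \<in> {1..d}\<times>{1..n}" for i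
  proof -
    have "measurable (PiM ({1..d}\<times>{1..n}) M) (M (j,i)) = borel_measurable (PiM ({1..d}\<times>{1..n}) M)"
      by (rule measurable_cong_sets) (simp_all only: M sets_lborel)
    thus ?thesis using measurable_component_singleton[OF that, of M] by simp
  qed
  have s1: "(\<lambda>x. \<Sum>i = 1..s. x (j, i)) \<in> borel_measurable (PiM ({1..d}\<times>{1..n}) M)"
    by (rule borel_measurable_sum) (use m1 sub1 in blast)
  have s2: "(\<lambda>x. \<Sum>i = s+1..n. x (j, i)) \<in> borel_measurable (PiM ({1..d}\<times>{1..n}) M)"
    by (rule borel_measurable_sum) (use m1 sub2 in blast)
  show "(\<lambda>x. (case k of (j,s) \<Rightarrow> sqrt (real s * real (n - s) / real n) *
        ((\<Sum>i = 1..s. x (j, i)) / real s - (\<Sum>i = s + 1..n. x (j, i)) / real (n - s)))) \<in> measurable (PiM ({1..d}\<times>{1..n}) M) lborel"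
    unfolding ks measurable_lborel2 using s1 s2 by simp
qed



definition wv :: "nat \<Rightarrow> nat \<Rightarrow> nat \<Rightarrow> real" where
  "wv n \<tau> i = (if i > \<tau> then 1 else 0) - real (n-\<tau>)/real n"
definition hh :: "nat \<Rightarrow> nat \<Rightarrow> real" where
  "hh n \<tau> = real \<tau> * real (n-\<tau>) / real n"
definition fL :: "nat \<Rightarrow> nat \<Rightarrow> nat \<Rightarrow> (nat\<Rightarrow>real) \<Rightarrow> (nat\<times>nat\<Rightarrow>real) \<Rightarrow> ennreal" where
  "fL d n \<tau> \<Delta> z = ennreal (exp (- sqrt (hh n \<tau>) * (\<Sum>j\<in>{1..d}. \<Delta> j * z (j,\<tau>)) - hh n \<tau> * (\<Sum>j\<in>{1..d}. (\<Delta> j)^2) / 2))"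

lemma obs_comp_prob: "prob_space ((\<lambda>(j,i). density lborel (normal_density (\<theta> j + (if i > \<tau> then \<Delta> j else 0)) 1)) k)"
  by (cases k) (simp add: prob_normal)

lemma obs_comp_sets: "sets ((\<lambda>(j,i). density lborel (normal_density (\<theta> j + (if i > \<tau> then \<Delta> j else 0)) 1)) k) = sets lborel"
  by (cases k) simp

lemma obs_prob: "prob_space (obs_law d n \<tau> \<theta> \<Delta>)"
  unfolding obs_law_def by (rule prob_space_PiM) (rule obs_comp_prob)

lemma distr_PiM_cw:
  assumes fin: "finite I"
  assumes "product_prob_space M"
  assumes "product_prob_space M'"
  assumes fm: "\<And>i. i \<in> I \<Longrightarrow> f i \<in> measurable (M i) (M' i)"
  assumes Tm: "(\<lambda>x. \<lambda>i\<in>I. f i (x i)) \<in> measurable (PiM I M) (PiM I M')"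
  shows   "distr (PiM I M) (PiM I M') (\<lambda>x. \<lambda>i\<in>I. f i (x i)) = PiM I (\<lambda>i. distr (M i) (M' i) (f i))"
proof -
  interpret M: product_prob_space M by fact
  interpret M': product_prob_space M' by fact
  define N where "N = (\<lambda>i. if i \<in> I then distr (M i) (M' i) (f i) else M' i)"
  interpret N: product_prob_space N
    by (intro product_prob_spaceI) (auto simp: N_def M'.prob_space fm intro: M.M.prob_space_distr)
  let ?T = "(\<lambda>x. \<lambda>i\<in>I. f i (x i))"
  have "distr (PiM I M) (PiM I M') ?T = PiM I N"
  proof (rule N.PiM_eqI)
    have N_events_eq: "sets (Pi\<^sub>M I N) = sets (Pi\<^sub>M I M')"
      unfolding N_def by (intro sets_PiM_cong) auto
    also have "\<dots> = sets (distr (Pi\<^sub>M I M) (Pi\<^sub>M I M') ?T)"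
      by simp
    finally show "sets (distr (Pi\<^sub>M I M) (Pi\<^sub>M I M') ?T) = sets (Pi\<^sub>M I N)"  ..
    fix A assume A: "\<And>i. i \<in> I \<Longrightarrow> A i \<in> N.M.events i"
    have "emeasure (distr (Pi\<^sub>M I M) (Pi\<^sub>M I M') ?T) (Pi\<^sub>E I A) =
          emeasure (Pi\<^sub>M I M) (?T -` Pi\<^sub>E I A \<inter> space (Pi\<^sub>M I M))"
    proof (intro emeasure_distr Tm)
      show "Pi\<^sub>E I A \<in> sets (Pi\<^sub>M I M')"
        unfolding N_events_eq [symmetric] by (intro sets_PiM_I_finite fin A)
    qed
    also have "?T -` Pi\<^sub>E I A \<inter> space (Pi\<^sub>M I M) = Pi\<^sub>E I (\<lambda>i. f i -` A i \<inter> space (M i))"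
      using A by (auto simp: space_PiM PiE_def Pi_def extensional_def N_def)
    also have "emeasure (Pi\<^sub>M I M) (Pi\<^sub>E I (\<lambda>i. f i -` A i \<inter> space (M i))) =
          (\<Prod>i\<in>I. emeasure (M i) (f i -` A i \<inter> space (M i)))"
      using A fm by (intro M.emeasure_PiM fin) (auto simp: N_def)
    also have "\<dots> = (\<Prod>i\<in>I. emeasure (distr (M i) (M' i) (f i)) (A i))"
      using A fm by (intro prod.cong emeasure_distr [symmetric]) (auto simp: N_def)
    also have "\<dots> = (\<Prod>i\<in>I. emeasure (N i) (A i))"
      unfolding N_def by (intro prod.cong) (auto simp: N_def)
    finally show "emeasure (distr (Pi\<^sub>M I M) (Pi\<^sub>M I M') ?T) (Pi\<^sub>E I A) = \<dots>" .
  qed fact+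
  also have "PiM I N = PiM I (\<lambda>i. distr (M i) (M' i) (f i))"
    by (intro PiM_cong) (auto simp: N_def)
  finally show ?thesis .
qed

lemma shift_meas:
  assumes M: "\<And>k. sets (M k) = sets lborel" and M': "\<And>k. sets (M' k) = sets lborel"
  shows "(\<lambda>x. \<lambda>k\<in>I. (\<lambda>(j,i) x. x + (c j::real)) k (x k)) \<in> measurable (PiM I M) (PiM I M')"
proof (rule measurable_restrict)
  fix k assume k: "k \<in> I"
  obtain j i where ks: "k = (j,i)" by (cases k)
  have "measurable (PiM I M) (M k) = borel_measurable (PiM I M)"
    by (rule measurable_cong_sets) (simp_all only: M sets_lborel)
  hence "(\<lambda>x. x k) \<in> borel_measurable (PiM I M)" using measurable_component_singleton[OF k, of M] by simp
  hence "(\<lambda>x. x k + c j) \<in> borel_measurable (PiM I M)" by simp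
  moreover have "measurable (PiM I M) (M' k) = borel_measurable (PiM I M)"
    by (rule measurable_cong_sets) (simp_all only: M' sets_lborel)
  ultimately show "(\<lambda>x. (case k of (j, i) \<Rightarrow> \<lambda>x. x + c j) (x k)) \<in> measurable (PiM I M) (M' k)"
    unfolding ks by simp
qed

lemma obs_shift:
  "obs_law d n \<tau> (\<lambda>j. \<theta> j + c j) \<Delta> =
   distr (obs_law d n \<tau> \<theta> \<Delta>) (obs_law d n \<tau> (\<lambda>j. \<theta> j + c j) \<Delta>) (\<lambda>x. \<lambda>k\<in>{1..d}\<times>{1..n}. (\<lambda>(j,i) x. x + c j) k (x k))"
proof -
  let ?I = "{1..d}\<times>{1..n}"
  let ?M = "(\<lambda>(j,i). density lborel (normal_density (\<theta> j + (if i > \<tau> then \<Delta> j else 0)) 1))"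
  let ?M' = "(\<lambda>(j,i). density lborel (normal_density (\<theta> j + c j + (if i > \<tau> then \<Delta> j else 0)) 1))"
  have "distr (PiM ?I ?M) (PiM ?I ?M') (\<lambda>x. \<lambda>k\<in>?I. (\<lambda>(j,i) x. x + c j) k (x k)) = PiM ?I (\<lambda>k. distr (?M k) (?M' k) ((\<lambda>(j,i) x. x + c j) k))"
  proof (rule distr_PiM_cw)
    show "finite ?I" by simp
    show "product_prob_space ?M" by (intro product_prob_spaceI) (rule obs_comp_prob)
    show "product_prob_space ?M'" by (intro product_prob_spaceI) (simp add: split_beta prob_normal)
    show "(\<lambda>x. \<lambda>k\<in>?I. (\<lambda>(j,i) x. x + c j) k (x k)) \<in> measurable (PiM ?I ?M) (PiM ?I ?M')"
      by (rule shift_meas) (simp_all add: split_beta)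
    fix k assume "k \<in> ?I"
    show "(\<lambda>(j,i) x. x + c j) k \<in> measurable (?M k) (?M' k)"
      by (cases k) simp
  qed
  also have "\<dots> = PiM ?I ?M'"
  proof (rule PiM_cong[OF refl])
    fix k assume "k \<in> ?I"
    obtain j i where ks: "k = (j,i)" by (cases k)
    have "distr (?M k) (?M' k) ((\<lambda>(j,i) x. x + c j) k) = distr (?M k) lborel (\<lambda>x. x + c j)"
      unfolding ks by (rule distr_cong) simp_all
    also have "\<dots> = ?M' k" unfolding ks by (simp add: normal_shift algebra_simps)
    finally show "distr (?M k) (?M' k) ((\<lambda>(j,i) x. x + c j) k) = ?M' k" .
  qed
  finally show ?thesis unfolding obs_law_def by (simp add: algebra_simps)
qed

lemma Zstat_shift:
  "Zstat d n (\<lambda>k\<in>{1..d}\<times>{1..n}. (\<lambda>(j,i) x. x + c j) k (x k)) = Zstat d n x"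
  unfolding Zstat_def
proof (rule restrict_ext)
  fix k assume k: "k \<in> {1..d}\<times>{1..n-1}"
  obtain j s where ks: "k = (j,s)" by (cases k)
  from k ks have j: "j \<in> {1..d}" and s: "1 \<le> s" "s \<le> n - 1" by auto
  let ?y = "(\<lambda>k\<in>{1..d}\<times>{1..n}. (\<lambda>(j,i) x. x + c j) k (x k))"
  have "(\<Sum>i = 1..s. ?y (j, i)) = (\<Sum>i = 1..s. x (j, i) + c j)"
    by (rule sum.cong) (use j s in auto)
  hence e1: "(\<Sum>i = 1..s. ?y (j, i)) = (\<Sum>i = 1..s. x (j, i)) + real s * c j"
    by (simp add: sum.distrib)
  have "(\<Sum>i = s+1..n. ?y (j, i)) = (\<Sum>i = s+1..n. x (j, i) + c j)"
    by (rule sum.cong) (use j s in auto)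
  hence e2: "(\<Sum>i = s+1..n. ?y (j, i)) = (\<Sum>i = s+1..n. x (j, i)) + real (n-s) * c j"
    using s by (simp add: sum.distrib)
  have ps: "real s > 0" "real (n - s) > 0" using s by auto
  show "(case k of (j, s) \<Rightarrow> sqrt (real s * real (n - s) / real n) *
        ((\<Sum>i = 1..s. ?y (j, i)) / real s - (\<Sum>i = s + 1..n. ?y (j, i)) / real (n - s))) =
        (case k of (j, s) \<Rightarrow> sqrt (real s * real (n - s) / real n) *
        ((\<Sum>i = 1..s. x (j, i)) / real s - (\<Sum>i = s + 1..n. x (j, i)) / real (n - s)))"
    unfolding ks using ps by (simp only: prod.case e1 e2) (simp add: field_simps)
qed

lemma Zlaw_shift:
  "Z_law d n \<tau> (\<lambda>j. \<theta> j + c j) \<Delta> = Z_law d n \<tau> \<theta> \<Delta>"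
proof -
  let ?T = "(\<lambda>x. \<lambda>k\<in>{1..d}\<times>{1..n}. (\<lambda>(j,i) x. x + c j) k (x k))"
  have Tm: "?T \<in> measurable (obs_law d n \<tau> \<theta> \<Delta>) (obs_law d n \<tau> (\<lambda>j. \<theta> j + c j) \<Delta>)"
    unfolding obs_law_def by (rule shift_meas) (simp_all add: split_beta)
  have Zm: "Zstat d n \<in> measurable (obs_law d n \<tau> (\<lambda>j. \<theta> j + c j) \<Delta>) (PiM ({1..d}\<times>{1..n-1}) (\<lambda>_. lborel))"
    unfolding obs_law_def by (rule Zstat_meas) (simp add: split_beta)
  have "Z_law d n \<tau> (\<lambda>j. \<theta> j + c j) \<Delta> = distr (distr (obs_law d n \<tau> \<theta> \<Delta>) (obs_law d n \<tau> (\<lambda>j. \<theta> j + c j) \<Delta>) ?T) (PiM ({1..d}\<times>{1..n-1}) (\<lambda>_. lborel)) (Zstat d n)"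
    unfolding Z_law_def by (subst obs_shift) (rule refl)
  also have "\<dots> = distr (obs_law d n \<tau> \<theta> \<Delta>) (PiM ({1..d}\<times>{1..n-1}) (\<lambda>_. lborel)) (Zstat d n \<circ> ?T)"
    by (rule distr_distr[OF Zm Tm])
  also have "\<dots> = distr (obs_law d n \<tau> \<theta> \<Delta>) (PiM ({1..d}\<times>{1..n-1}) (\<lambda>_. lborel)) (Zstat d n)"
    by (rule distr_cong[OF refl refl]) (simp only: o_def Zstat_shift)
  finally show ?thesis unfolding Z_law_def .
qed



lemma lin_sum: "finite A \<Longrightarrow> (\<Sum>i\<in>A. a * (x i - t) - (a::real)^2/2) = a * (\<Sum>i\<in>A. x i) - real (card A) * (a*t + a^2/2)"
proof -
  assume A: "finite A"
  have "(\<Sum>i\<in>A. a * (x i - t) - (a::real)^2/2) = (\<Sum>i\<in>A. a * x i + (-(a*t + a^2/2)))"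
    by (rule sum.cong) (auto simp: algebra_simps)
  also have "\<dots> = a * (\<Sum>i\<in>A. x i) + real (card A) * (-(a*t + a^2/2))"
    by (simp add: sum.distrib sum_distrib_left)
  finally show ?thesis by (simp add: algebra_simps)
qed

lemma key_sum:
  assumes t: "1 \<le> \<tau>" "\<tau> < n"
  shows "(\<Sum>i\<in>{1..n}. \<Delta> * wv n \<tau> i * (x i - t) - (\<Delta> * wv n \<tau> i)^2/2)
    = - sqrt (hh n \<tau>) * \<Delta> * (sqrt (hh n \<tau>) * ((\<Sum>i=1..\<tau>. x i)/real \<tau> - (\<Sum>i=\<tau>+1..n. x i)/real (n-\<tau>))) - hh n \<tau> * \<Delta>^2/2"
proof -
  define N where "N = real n"
  define T where "T = real \<tau>"
  define K where "K = real (n - \<tau>)"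
  have KN: "K = N - T" using t by (simp add: K_def N_def T_def of_nat_diff)
  have pos: "N > 0" "T > 0" "K > 0" using t by (auto simp: N_def T_def K_def)
  define S where "S = (\<Sum>i=1..\<tau>. x i)"
  define R where "R = (\<Sum>i=\<tau>+1..n. x i)"
  have split: "{1..n} = {1..\<tau>} \<union> {\<tau>+1..n}" using t by auto
  have A: "(\<Sum>i\<in>{1..\<tau>}. \<Delta> * wv n \<tau> i * (x i - t) - (\<Delta> * wv n \<tau> i)^2/2)
      = (\<Sum>i\<in>{1..\<tau>}. \<Delta> * (-K/N) * (x i - t) - (\<Delta> * (-K/N))^2/2)"
    by (rule sum.cong) (auto simp: wv_def K_def N_def)
  also have "\<dots> = \<Delta> * (-K/N) * (S - T * t) - T * (\<Delta> * (-K/N))^2/2"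
    using lin_sum[of "{1..\<tau>}" "\<Delta> * (-K/N)" x t] by (simp add: S_def T_def right_diff_distrib distrib_left)
  finally have A': "(\<Sum>i\<in>{1..\<tau>}. \<Delta> * wv n \<tau> i * (x i - t) - (\<Delta> * wv n \<tau> i)^2/2) = \<Delta> * (-K/N) * (S - T * t) - T * (\<Delta> * (-K/N))^2/2" .
  have B: "(\<Sum>i\<in>{\<tau>+1..n}. \<Delta> * wv n \<tau> i * (x i - t) - (\<Delta> * wv n \<tau> i)^2/2)
      = (\<Sum>i\<in>{\<tau>+1..n}. \<Delta> * (1-K/N) * (x i - t) - (\<Delta> * (1-K/N))^2/2)"
    by (rule sum.cong) (auto simp: wv_def K_def N_def)
  also have "\<dots> = \<Delta> * (1-K/N) * (R - K * t) - K * (\<Delta> * (1-K/N))^2/2"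
    using lin_sum[of "{\<tau>+1..n}" "\<Delta> * (1-K/N)" x t] t by (simp add: R_def K_def right_diff_distrib distrib_left)
  finally have B': "(\<Sum>i\<in>{\<tau>+1..n}. \<Delta> * wv n \<tau> i * (x i - t) - (\<Delta> * wv n \<tau> i)^2/2) = \<Delta> * (1-K/N) * (R - K * t) - K * (\<Delta> * (1-K/N))^2/2" .
  have hh: "hh n \<tau> = T * K / N" by (simp add: hh_def T_def K_def N_def)
  have sq: "sqrt (hh n \<tau>) * sqrt (hh n \<tau>) = T * K / N"
    using pos hh by simp
  have "(\<Sum>i\<in>{1..n}. \<Delta> * wv n \<tau> i * (x i - t) - (\<Delta> * wv n \<tau> i)^2/2)
     = \<Delta> * (-K/N) * (S - T * t) - T * (\<Delta> * (-K/N))^2/2 + (\<Delta> * (1-K/N) * (R - K * t) - K * (\<Delta> * (1-K/N))^2/2)"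
  proof -
    have "(\<Sum>i\<in>{1..n}. \<Delta> * wv n \<tau> i * (x i - t) - (\<Delta> * wv n \<tau> i)^2/2) =
      (\<Sum>i\<in>{1..\<tau>}. \<Delta> * wv n \<tau> i * (x i - t) - (\<Delta> * wv n \<tau> i)^2/2) + (\<Sum>i\<in>{\<tau>+1..n}. \<Delta> * wv n \<tau> i * (x i - t) - (\<Delta> * wv n \<tau> i)^2/2)"
      unfolding split by (rule sum.union_disjoint) auto
    also have "\<dots> = \<Delta> * (-K/N) * (S - T * t) - T * (\<Delta> * (-K/N))^2/2 + (\<Delta> * (1-K/N) * (R - K * t) - K * (\<Delta> * (1-K/N))^2/2)"
      by (simp only: A' B')
    finally show ?thesis .
  qed
  also have "\<dots> = - (T * K / N) * \<Delta> * (S / T - R / K) - (T * K / N) * \<Delta>^2/2"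
    using pos unfolding KN by (simp add: field_simps power2_eq_square)
  also have "\<dots> = - sqrt (hh n \<tau>) * \<Delta> * (sqrt (hh n \<tau>) * (S/T - R/K)) - hh n \<tau> * \<Delta>^2/2"
    using sq hh by (simp add: algebra_simps diff_divide_distrib)
  finally show ?thesis by (simp add: S_def R_def T_def K_def)
qed



lemma prod_ratio:
  assumes t: "1 \<le> \<tau>" "\<tau> < n"
  shows "(\<Prod>k\<in>{1..d}\<times>{1..n}. (\<lambda>(j,i) y. ennreal (exp (\<Delta> j * wv n \<tau> i * (y - \<theta> j) - (\<Delta> j * wv n \<tau> i)^2/2))) k (x k))
     = fL d n \<tau> \<Delta> (Zstat d n x)"
proof -
  have "(\<Prod>k\<in>{1..d}\<times>{1..n}. (\<lambda>(j,i) y. ennreal (exp (\<Delta> j * wv n \<tau> i * (y - \<theta> j) - (\<Delta> j * wv n \<tau> i)^2/2))) k (x k))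
     = ennreal (\<Prod>k\<in>{1..d}\<times>{1..n}. (\<lambda>(j,i). exp (\<Delta> j * wv n \<tau> i * (x (j,i) - \<theta> j) - (\<Delta> j * wv n \<tau> i)^2/2)) k)"
    by (subst prod_ennreal[symmetric]) (auto intro!: prod.cong simp: split_beta)
  also have "(\<Prod>k\<in>{1..d}\<times>{1..n}. (\<lambda>(j,i). exp (\<Delta> j * wv n \<tau> i * (x (j,i) - \<theta> j) - (\<Delta> j * wv n \<tau> i)^2/2)) k)
     = exp (\<Sum>k\<in>{1..d}\<times>{1..n}. (\<lambda>(j,i). \<Delta> j * wv n \<tau> i * (x (j,i) - \<theta> j) - (\<Delta> j * wv n \<tau> i)^2/2) k)"
    by (subst exp_sum) (auto intro!: prod.cong simp: split_beta)
  also have "(\<Sum>k\<in>{1..d}\<times>{1..n}. (\<lambda>(j,i). \<Delta> j * wv n \<tau> i * (x (j,i) - \<theta> j) - (\<Delta> j * wv n \<tau> i)^2/2) k)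
     = (\<Sum>j\<in>{1..d}. \<Sum>i\<in>{1..n}. \<Delta> j * wv n \<tau> i * (x (j,i) - \<theta> j) - (\<Delta> j * wv n \<tau> i)^2/2)"
    by (subst sum.cartesian_product[symmetric]) (simp add: split_beta)
  also have "\<dots> = (\<Sum>j\<in>{1..d}. - sqrt (hh n \<tau>) * \<Delta> j * Zstat d n x (j,\<tau>) - hh n \<tau> * (\<Delta> j)^2/2)"
  proof (rule sum.cong[OF refl])
    fix j assume j: "j \<in> {1..d}"
    have "Zstat d n x (j,\<tau>) = sqrt (hh n \<tau>) * ((\<Sum>i=1..\<tau>. x (j,i))/real \<tau> - (\<Sum>i=\<tau>+1..n. x (j,i))/real (n-\<tau>))"
      using j t by (simp add: Zstat_def hh_def)
    thus "(\<Sum>i\<in>{1..n}. \<Delta> j * wv n \<tau> i * (x (j,i) - \<theta> j) - (\<Delta> j * wv n \<tau> i)^2/2) = - sqrt (hh n \<tau>) * \<Delta> j * Zstat d n x (j,\<tau>) - hh n \<tau> * (\<Delta> j)^2/2"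
      using key_sum[OF t, of "\<Delta> j" "\<lambda>i. x (j,i)" "\<theta> j"] by simp
  qed
  also have "\<dots> = - sqrt (hh n \<tau>) * (\<Sum>j\<in>{1..d}. \<Delta> j * Zstat d n x (j,\<tau>)) - hh n \<tau> * (\<Sum>j\<in>{1..d}. (\<Delta> j)^2) / 2"
    by (simp add: sum_subtractf sum_distrib_left sum_divide_distrib algebra_simps)
  finally show ?thesis by (simp add: fL_def)
qed



lemma fL_meas: "fL d n \<tau> \<Delta> \<in> borel_measurable (PiM ({1..d}\<times>{1..n-1}) (\<lambda>_. lborel))"
  if t: "1 \<le> \<tau>" "\<tau> < n"
proof -
  have m1: "(\<lambda>z. z (j,\<tau>)) \<in> borel_measurable (PiM ({1..d}\<times>{1..n-1}) (\<lambda>_. lborel))" if "j \<in> {1..d}" for j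
  proof -
    have "(j,\<tau>) \<in> {1..d}\<times>{1..n-1}" using that t by auto
    from measurable_component_singleton[OF this, of "\<lambda>_. lborel"] show ?thesis by simp
  qed
  have "(\<lambda>z. \<Sum>j\<in>{1..d}. \<Delta> j * z (j,\<tau>)) \<in> borel_measurable (PiM ({1..d}\<times>{1..n-1}) (\<lambda>_. lborel))"
    apply (rule borel_measurable_sum)
    apply (rule borel_measurable_times)
     apply simp
    apply (erule m1)
    done
  thus ?thesis unfolding fL_def by simp
qed

lemma Zlaw_density:
  assumes t: "1 \<le> \<tau>" "\<tau> < n"
  shows "Z_law d n \<tau> \<theta> \<Delta> = density (null_law d n \<tau> \<theta>) (fL d n \<tau> \<Delta>)"
proof -
  let ?I = "{1..d}\<times>{1..n}"
  let ?J = "{1..d}\<times>{1..n-1}"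
  define c where "c j = real (n-\<tau>)/real n * \<Delta> j" for j
  define \<theta>0 where "\<theta>0 j = \<theta> j - c j" for j
  let ?N = "(\<lambda>(j,i). density lborel (normal_density (\<theta> j + (if i > \<tau> then (\<lambda>_. 0::real) j else 0)) 1))"
  let ?g = "(\<lambda>(j,i) y. ennreal (exp (\<Delta> j * wv n \<tau> i * (y - \<theta> j) - (\<Delta> j * wv n \<tau> i)^2/2)))"
  have th: "\<theta> = (\<lambda>j. \<theta>0 j + c j)" by (simp add: \<theta>0_def)
  have "Z_law d n \<tau> \<theta> \<Delta> = Z_law d n \<tau> \<theta>0 \<Delta>"
    by (subst th) (rule Zlaw_shift)
  have comp: "(\<lambda>(j,i). density lborel (normal_density (\<theta>0 j + (if i > \<tau> then \<Delta> j else 0)) 1)) = (\<lambda>k. density (?N k) (?g k))"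
  proof
    fix k :: "nat \<times> nat"
    obtain j i where k: "k = (j,i)" by (cases k)
    have "density (?N k) (?g k) = density lborel (\<lambda>y. ennreal (normal_density (\<theta> j) 1 y) * ennreal (exp (\<Delta> j * wv n \<tau> i * (y - \<theta> j) - (\<Delta> j * wv n \<tau> i)^2/2)))"
      unfolding k by (simp add: density_density_eq)
    also have "\<dots> = density lborel (\<lambda>y. ennreal (normal_density (\<theta> j + \<Delta> j * wv n \<tau> i) 1 y))"
      by (rule density_cong) (auto simp: ennreal_mult'[symmetric] normal_ratio[of "\<theta> j + \<Delta> j * wv n \<tau> i" _ "\<theta> j"])
    also have "\<theta> j + \<Delta> j * wv n \<tau> i = \<theta>0 j + (if i > \<tau> then \<Delta> j else 0)"
      by (simp add: \<theta>0_def c_def wv_def algebra_simps)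
    finally show "(\<lambda>(j,i). density lborel (normal_density (\<theta>0 j + (if i > \<tau> then \<Delta> j else 0)) 1)) k = density (?N k) (?g k)"
      by (simp add: k)
  qed
  have "obs_law d n \<tau> \<theta>0 \<Delta> = PiM ?I (\<lambda>k. density (?N k) (?g k))"
    unfolding obs_law_def comp ..
  also have "\<dots> = density (PiM ?I ?N) (\<lambda>x. \<Prod>k\<in>?I. ?g k (x k))"
  proof (rule PiM_density_prod)
    fix k
    show "prob_space (?N k)" by (rule obs_comp_prob)
    show "?g k \<in> borel_measurable (?N k)" by (cases k) simp
    show "prob_space (density (?N k) (?g k))"
      using obs_comp_prob[where \<theta>=\<theta>0 and \<Delta>=\<Delta> and \<tau>=\<tau> and k=k] by (simp only: comp)
  qed simp
  also have "\<dots> = density (obs_law d n \<tau> \<theta> (\<lambda>_. 0)) (\<lambda>x. fL d n \<tau> \<Delta> (Zstat d n x))"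
    unfolding obs_law_def by (simp only: prod_ratio[OF t])
  finally have ob: "obs_law d n \<tau> \<theta>0 \<Delta> = density (obs_law d n \<tau> \<theta> (\<lambda>_. 0)) (\<lambda>x. fL d n \<tau> \<Delta> (Zstat d n x))" .
  have Zm: "Zstat d n \<in> measurable (obs_law d n \<tau> \<theta> (\<lambda>_. 0)) (PiM ?J (\<lambda>_. lborel))"
    unfolding obs_law_def by (rule Zstat_meas) (simp add: split_beta)
  have "Z_law d n \<tau> \<theta>0 \<Delta> = distr (density (obs_law d n \<tau> \<theta> (\<lambda>_. 0)) (\<lambda>x. fL d n \<tau> \<Delta> (Zstat d n x))) (PiM ?J (\<lambda>_. lborel)) (Zstat d n)"
    unfolding Z_law_def ob ..
  also have "\<dots> = density (null_law d n \<tau> \<theta>) (fL d n \<tau> \<Delta>)"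
    unfolding null_law_def Z_law_def by (rule density_distr[symmetric, OF fL_meas[OF t] Zm])
  finally show ?thesis using \<open>Z_law d n \<tau> \<theta> \<Delta> = Z_law d n \<tau> \<theta>0 \<Delta>\<close> by simp
qed



definition Sset :: "nat \<Rightarrow> nat \<Rightarrow> (nat set \<times> (nat \<Rightarrow> real)) set" where
  "Sset d p = {(m, \<epsilon>). m \<subseteq> {1..d} \<and> card m = p \<and> \<epsilon> \<in> PiE m (\<lambda>_. {-1, 1::real})}"
definition Dv :: "nat \<Rightarrow> real \<Rightarrow> nat set \<times> (nat \<Rightarrow> real) \<Rightarrow> nat \<Rightarrow> real" where
  "Dv p r w = (\<lambda>j. if j \<in> fst w then r / sqrt (real p) * snd w j else 0)"

lemma rad_prior_eq: "rad_prior d p r = map_pmf (Dv p r) (pmf_of_set (Sset d p))"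
proof -
  have "(\<lambda>(m, \<epsilon>). \<lambda>j. if j \<in> m then r / sqrt (real p) * \<epsilon> j else 0) = Dv p r"
    by (auto simp: Dv_def fun_eq_iff)
  thus ?thesis unfolding rad_prior_def Sset_def by simp
qed

lemma Sset_finite: "finite (Sset d p)"
proof -
  have "Sset d p \<subseteq> (SIGMA m:Pow {1..d}. PiE m (\<lambda>_. {-1, 1::real}))"
    by (auto simp: Sset_def)
  moreover have "finite (SIGMA m:Pow {1..d}. PiE m (\<lambda>_. {-1, 1::real}))"
    by (intro finite_SigmaI finite_PiE) (auto intro: finite_subset)
  ultimately show ?thesis by (rule finite_subset)
qed

lemma null_prob: "prob_space (null_law d n \<tau> \<theta>)"
  unfolding null_law_def Z_law_def
proof (rule prob_space.prob_space_distr[OF obs_prob])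
  show "Zstat d n \<in> measurable (obs_law d n \<tau> \<theta> (\<lambda>_. 0)) (PiM ({1..d}\<times>{1..n-1}) (\<lambda>_. lborel))"
    unfolding obs_law_def by (rule Zstat_meas) (simp add: split_beta)
qed

lemma Zlaw_prob: "prob_space (Z_law d n \<tau> \<theta> \<Delta>)"
  unfolding Z_law_def
proof (rule prob_space.prob_space_distr[OF obs_prob])
  show "Zstat d n \<in> measurable (obs_law d n \<tau> \<theta> \<Delta>) (PiM ({1..d}\<times>{1..n-1}) (\<lambda>_. lborel))"
    unfolding obs_law_def by (rule Zstat_meas) (simp add: split_beta)
qed

lemma sets_Zlaw: "sets (Z_law d n \<tau> \<theta> \<Delta>) = sets (null_law d n \<tau> \<theta>)"
  by (simp add: Z_law_def null_law_def)

lemma mix_density: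
  assumes t: "1 \<le> \<tau>" "\<tau> < n" and ne: "Sset d p \<noteq> {}"
  shows "mix_law d n \<tau> \<theta> p r = density (null_law d n \<tau> \<theta>) (\<lambda>z. (\<Sum>w\<in>Sset d p. fL d n \<tau> (Dv p r w) z) / of_nat (card (Sset d p)))"
    (is "?L = density ?N ?G")
proof (rule measure_eqI)
  have sb: "sets ?L = sets ?N"
    unfolding mix_law_def by (rule sets_bind) (simp_all add: sets_Zlaw)
  thus "sets ?L = sets (density ?N ?G)" by simp
  fix A assume "A \<in> sets ?L"
  hence A: "A \<in> sets ?N" using sb by simp
  have fm: "fL d n \<tau> \<Delta> \<in> borel_measurable ?N" for \<Delta>
    unfolding null_law_def Z_law_def using fL_meas[OF t] by simp
  have km: "(\<lambda>\<Delta>. Z_law d n \<tau> \<theta> \<Delta>) \<in> measurable (measure_pmf (rad_prior d p r)) (subprob_algebra ?N)"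
    by (auto simp: space_subprob_algebra sets_Zlaw intro!: prob_space_imp_subprob_space Zlaw_prob)
  have "emeasure ?L A = (\<integral>\<^sup>+\<Delta>. emeasure (Z_law d n \<tau> \<theta> \<Delta>) A \<partial>measure_pmf (rad_prior d p r))"
    unfolding mix_law_def by (rule emeasure_bind[OF _ km A]) simp
  also have "\<dots> = (\<Sum>w\<in>Sset d p. emeasure (Z_law d n \<tau> \<theta> (Dv p r w)) A) / of_nat (card (Sset d p))"
    unfolding rad_prior_eq by (simp add: nn_integral_pmf_of_set ne Sset_finite)
  also have "\<dots> = (\<Sum>w\<in>Sset d p. \<integral>\<^sup>+z. fL d n \<tau> (Dv p r w) z * indicator A z \<partial>?N) / of_nat (card (Sset d p))"
    using A fm by (simp add: Zlaw_density[OF t] emeasure_density)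
  also have "\<dots> = (\<integral>\<^sup>+z. (\<Sum>w\<in>Sset d p. fL d n \<tau> (Dv p r w) z * indicator A z) \<partial>?N) / of_nat (card (Sset d p))"
    using A fm by (subst nn_integral_sum) auto
  also have "\<dots> = (\<integral>\<^sup>+z. (\<Sum>w\<in>Sset d p. fL d n \<tau> (Dv p r w) z * indicator A z) / of_nat (card (Sset d p)) \<partial>?N)"
    using A fm by (subst nn_integral_divide) auto
  also have "\<dots> = (\<integral>\<^sup>+z. ?G z * indicator A z \<partial>?N)"
    by (intro nn_integral_cong) (simp add: sum_distrib_right sum_distrib_left ennreal_divide_times ennreal_times_divide mult.commute)
  also have "\<dots> = emeasure (density ?N ?G) A"
    using A fm by (subst emeasure_density) auto
  finally show "emeasure ?L A = emeasure (density ?N ?G) A" .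
qed



lemma fL_mult: "fL d n \<tau> a z * fL d n \<tau> b z = fL d n \<tau> (\<lambda>j. a j + b j) z * ennreal (exp (hh n \<tau> * (\<Sum>j\<in>{1..d}. a j * b j)))"
proof -
  have "(- sqrt (hh n \<tau>) * (\<Sum>j\<in>{1..d}. a j * z (j,\<tau>)) - hh n \<tau> * (\<Sum>j\<in>{1..d}. (a j)^2) / 2) +
        (- sqrt (hh n \<tau>) * (\<Sum>j\<in>{1..d}. b j * z (j,\<tau>)) - hh n \<tau> * (\<Sum>j\<in>{1..d}. (b j)^2) / 2)
      = (- sqrt (hh n \<tau>) * (\<Sum>j\<in>{1..d}. (a j + b j) * z (j,\<tau>)) - hh n \<tau> * (\<Sum>j\<in>{1..d}. (a j + b j)^2) / 2)
        + hh n \<tau> * (\<Sum>j\<in>{1..d}. a j * b j)"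
    by (simp add: power2_eq_square algebra_simps sum.distrib sum_distrib_left sum_divide_distrib sum_subtractf)
  thus ?thesis
    unfolding fL_def by (simp add: ennreal_mult'[symmetric] mult_exp_exp)
qed

lemma int_fL:
  assumes t: "1 \<le> \<tau>" "\<tau> < n"
  shows "(\<integral>\<^sup>+z. fL d n \<tau> \<Gamma> z \<partial>null_law d n \<tau> \<theta>) = 1"
proof -
  have fm: "fL d n \<tau> \<Gamma> \<in> borel_measurable (null_law d n \<tau> \<theta>)"
    unfolding null_law_def Z_law_def using fL_meas[OF t] by simp
  have sp: "space (Z_law d n \<tau> \<theta> \<Gamma>) = space (null_law d n \<tau> \<theta>)"
    by (rule sets_eq_imp_space_eq) (rule sets_Zlaw)
  have "1 = emeasure (Z_law d n \<tau> \<theta> \<Gamma>) (space (Z_law d n \<tau> \<theta> \<Gamma>))"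
    using prob_space.emeasure_space_1[OF Zlaw_prob] by simp
  also have "\<dots> = emeasure (density (null_law d n \<tau> \<theta>) (fL d n \<tau> \<Gamma>)) (space (null_law d n \<tau> \<theta>))"
    by (simp add: sp Zlaw_density[OF t, symmetric])
  also have "\<dots> = (\<integral>\<^sup>+z. fL d n \<tau> \<Gamma> z * indicator (space (null_law d n \<tau> \<theta>)) z \<partial>null_law d n \<tau> \<theta>)"
    by (rule emeasure_density[OF fm]) simp
  also have "\<dots> = (\<integral>\<^sup>+z. fL d n \<tau> \<Gamma> z \<partial>null_law d n \<tau> \<theta>)"
    by (rule nn_integral_cong) simp
  finally show ?thesis by simp
qed

lemma chi2_formula:
  assumes t: "1 \<le> \<tau>" "\<tau> < n" and ne: "Sset d p \<noteq> {}"
  shows "chi2_moment d n \<tau> \<theta> p r = ennreal ((\<Sum>w\<in>Sset d p. \<Sum>w'\<in>Sset d p. exp (hh n \<tau> * (\<Sum>j\<in>{1..d}. Dv p r w j * Dv p r w' j))) / (real (card (Sset d p)))^2)"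
proof -
  let ?S = "Sset d p"
  let ?N = "null_law d n \<tau> \<theta>"
  let ?c = "of_nat (card ?S) :: ennreal"
  let ?G = "\<lambda>z. (\<Sum>w\<in>?S. fL d n \<tau> (Dv p r w) z) / ?c"
  interpret N: prob_space ?N by (rule null_prob)
  have fm: "fL d n \<tau> \<Delta> \<in> borel_measurable ?N" for \<Delta>
    unfolding null_law_def Z_law_def using fL_meas[OF t] by simp
  have Gm: "?G \<in> borel_measurable ?N" using fm by simp
  have cpos: "card ?S > 0" using ne Sset_finite by (simp add: card_gt_0_iff)
  have ae: "AE z in ?N. ?G z = lik_ratio d n \<tau> \<theta> p r z"
    unfolding lik_ratio_def mix_density[OF t ne] by (rule N.RN_deriv_unique[OF Gm refl])
  have "chi2_moment d n \<tau> \<theta> p r = (\<integral>\<^sup>+z. (?G z)^2 \<partial>?N)"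
    unfolding chi2_moment_def by (rule nn_integral_cong_AE) (use ae in auto)
  also have "\<dots> = (\<integral>\<^sup>+z. (\<Sum>w\<in>?S. \<Sum>w'\<in>?S. fL d n \<tau> (\<lambda>j. Dv p r w j + Dv p r w' j) z * ennreal (exp (hh n \<tau> * (\<Sum>j\<in>{1..d}. Dv p r w j * Dv p r w' j)))) / ?c^2 \<partial>?N)"
  proof (rule nn_integral_cong)
    fix z
    have "(?G z)^2 = (\<Sum>w\<in>?S. fL d n \<tau> (Dv p r w) z)^2 / ?c^2"
      by (simp add: power_divide_distrib_ennreal)
    also have "(\<Sum>w\<in>?S. fL d n \<tau> (Dv p r w) z)^2 = (\<Sum>w\<in>?S. \<Sum>w'\<in>?S. fL d n \<tau> (Dv p r w) z * fL d n \<tau> (Dv p r w') z)"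
      by (simp add: power2_eq_square sum_product)
    finally show "(?G z)^2 = (\<Sum>w\<in>?S. \<Sum>w'\<in>?S. fL d n \<tau> (\<lambda>j. Dv p r w j + Dv p r w' j) z * ennreal (exp (hh n \<tau> * (\<Sum>j\<in>{1..d}. Dv p r w j * Dv p r w' j)))) / ?c^2"
      by (simp add: fL_mult)
  qed
  also have "\<dots> = (\<Sum>w\<in>?S. \<Sum>w'\<in>?S. (\<integral>\<^sup>+z. fL d n \<tau> (\<lambda>j. Dv p r w j + Dv p r w' j) z \<partial>?N) * ennreal (exp (hh n \<tau> * (\<Sum>j\<in>{1..d}. Dv p r w j * Dv p r w' j)))) / ?c^2"
    using fm by (simp add: nn_integral_divide nn_integral_sum nn_integral_multc)
  also have "\<dots> = (\<Sum>w\<in>?S. \<Sum>w'\<in>?S. ennreal (exp (hh n \<tau> * (\<Sum>j\<in>{1..d}. Dv p r w j * Dv p r w' j)))) / ?c^2"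
    by (simp add: int_fL[OF t])
  also have "\<dots> = ennreal (\<Sum>w\<in>?S. \<Sum>w'\<in>?S. exp (hh n \<tau> * (\<Sum>j\<in>{1..d}. Dv p r w j * Dv p r w' j))) / ennreal ((real (card ?S))^2)"
    by (simp add: sum_ennreal sum_nonneg ennreal_of_nat_eq_real_of_nat ennreal_power)
  also have "\<dots> = ennreal ((\<Sum>w\<in>?S. \<Sum>w'\<in>?S. exp (hh n \<tau> * (\<Sum>j\<in>{1..d}. Dv p r w j * Dv p r w' j))) / (real (card ?S))^2)"
    using cpos by (intro divide_ennreal) (auto intro!: sum_nonneg)
  finally show ?thesis .
qed



definition Pset :: "nat \<Rightarrow> nat \<Rightarrow> nat set set" where
  "Pset d p = {m. m \<subseteq> {1..d} \<and> card m = p}"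

lemma Pset_finite: "finite (Pset d p)"
  unfolding Pset_def by (rule finite_subset[of _ "Pow {1..d}"]) auto

lemma card_Pset: "card (Pset d p) = d choose p"
  unfolding Pset_def using n_subsets[of "{1..d}" p] by simp

lemma K1:
  assumes T: "T \<subseteq> {1..d}" "card T = k" "k \<le> p"
  shows "card {m'\<in>Pset d p. T \<subseteq> m'} \<le> (d - k) choose (p - k)"
proof -
  have fin: "finite T" using T(1) by (rule finite_subset) simp
  have sub: "{m'\<in>Pset d p. T \<subseteq> m'} \<subseteq> (\<lambda>B. B \<union> T) ` {B. B \<subseteq> {1..d} - T \<and> card B = p - k}"
  proof
    fix m' assume m': "m' \<in> {m'\<in>Pset d p. T \<subseteq> m'}"
    hence mm: "m' \<subseteq> {1..d}" "card m' = p" "T \<subseteq> m'" by (auto simp: Pset_def)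
    have "finite m'" using mm(1) by (rule finite_subset) simp
    hence "card (m' - T) = p - k" using mm T card_Diff_subset[OF fin mm(3)] by simp
    moreover have "m' = (m' - T) \<union> T" using mm by auto
    ultimately show "m' \<in> (\<lambda>B. B \<union> T) ` {B. B \<subseteq> {1..d} - T \<and> card B = p - k}"
      using mm by blast
  qed
  have "card {m'\<in>Pset d p. T \<subseteq> m'} \<le> card ((\<lambda>B. B \<union> T) ` {B. B \<subseteq> {1..d} - T \<and> card B = p - k})"
    by (rule card_mono[OF _ sub]) (auto intro: finite_subset[of _ "Pow {1..d}"])
  also have "\<dots> \<le> card {B. B \<subseteq> {1..d} - T \<and> card B = p - k}"
    by (rule card_image_le) (auto intro: finite_subset[of _ "Pow {1..d}"])
  also have "\<dots> = card ({1..d} - T) choose (p - k)"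
    by (rule n_subsets) simp
  also have "card ({1..d} - T) = d - k"
    using T fin by (simp add: card_Diff_subset)
  finally show ?thesis .
qed

lemma K2:
  assumes "k \<le> p" "p \<le> d"
  shows "real ((d - k) choose (p - k)) * real d ^ k \<le> real p ^ k * real (d choose p)"
  using assms
proof (induction k)
  case 0 thus ?case by simp
next
  case (Suc k)
  hence IH: "real ((d - k) choose (p - k)) * real d ^ k \<le> real p ^ k * real (d choose p)" by simp
  have kp: "k < p" "k < d" using Suc.prems by auto
  have id: "real (d - k) * real ((d - Suc k) choose (p - Suc k)) = real ((d - k) choose (p - k)) * real (p - k)"
  proof -
    have "Suc (d - Suc k) * ((d - Suc k) choose (p - Suc k)) = (Suc (d - Suc k) choose Suc (p - Suc k)) * Suc (p - Suc k)"
      by (rule Suc_times_binomial_eq)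
    moreover have "Suc (d - Suc k) = d - k" "Suc (p - Suc k) = p - k" using kp by auto
    ultimately show ?thesis by (metis of_nat_mult)
  qed
  have dk: "real (d - k) > 0" using kp by simp
  have u: "real (p - k) * real d / real (d - k) \<le> real p"
    using dk kp Suc.prems by (simp add: divide_le_eq of_nat_diff algebra_simps) (metis mult.commute mult_left_mono of_nat_0_le_iff of_nat_le_iff)
  have "real ((d - Suc k) choose (p - Suc k)) * real d ^ Suc k
      = real ((d - k) choose (p - k)) * (real (p - k) * real d / real (d - k)) * real d ^ k"
    using id dk by (simp add: field_simps)
  also have "\<dots> \<le> real ((d - k) choose (p - k)) * real p * real d ^ k"
    using u by (intro mult_right_mono mult_left_mono) auto
  also have "\<dots> = (real ((d - k) choose (p - k)) * real d ^ k) * real p" by simp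
  also have "\<dots> \<le> real p ^ k * real (d choose p) * real p"
    using IH by (simp add: mult_right_mono)
  finally show ?case by (simp add: algebra_simps)
qed

lemma prod_ind:
  assumes "finite T"
  shows "(\<Prod>j\<in>T. (if j \<in> m' then t else 0::real)) = (if T \<subseteq> m' then t ^ card T else 0)"
proof (cases "T \<subseteq> m'")
  case True
  hence "(\<Prod>j\<in>T. (if j \<in> m' then t else 0::real)) = (\<Prod>j\<in>T. t)" by (intro prod.cong) auto
  thus ?thesis using True by simp
next
  case False
  then obtain j where "j \<in> T" "j \<notin> m'" by auto
  thus ?thesis using False assms by (intro trans[OF prod_zero]) auto
qed

lemma K3:
  assumes m: "m \<in> Pset d p" and t: "t \<ge> 0" and p: "1 \<le> p" "p \<le> d"
  shows "(\<Sum>m'\<in>Pset d p. \<Prod>j\<in>m. (if j \<in> m' then 1 + t else 1)) \<le> real (d choose p) * (1 + t * p / d)^p"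
proof -
  have mfin: "finite m" and msub: "m \<subseteq> {1..d}" and mc: "card m = p"
    using m by (auto simp: Pset_def intro: finite_subset)
  have dpos: "real d > 0" using p by simp
  have e1: "(\<Prod>j\<in>m. (if j \<in> m' then 1 + t else 1)) = (\<Sum>T\<in>Pow m. if T \<subseteq> m' then t ^ card T else 0)" for m'
  proof -
    have "(\<Prod>j\<in>m. (if j \<in> m' then 1 + t else 1)) = (\<Prod>j\<in>m. (if j \<in> m' then t else 0) + 1)"
      by (intro prod.cong) auto
    also have "\<dots> = (\<Sum>T\<in>Pow m. (\<Prod>j\<in>T. (if j \<in> m' then t else 0)) * (\<Prod>j\<in>m-T. 1))"
      by (rule prod_add[OF mfin])
    also have "\<dots> = (\<Sum>T\<in>Pow m. if T \<subseteq> m' then t ^ card T else 0)"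
    proof (rule sum.cong[OF refl])
      fix T assume "T \<in> Pow m"
      hence "finite T" using mfin by (auto intro: finite_subset)
      thus "(\<Prod>j\<in>T. (if j \<in> m' then t else 0)) * (\<Prod>j\<in>m-T. 1) = (if T \<subseteq> m' then t ^ card T else 0)"
        using prod_ind[of T m' t] by simp
    qed
    finally show ?thesis .
  qed
  have "(\<Sum>m'\<in>Pset d p. \<Prod>j\<in>m. (if j \<in> m' then 1 + t else 1)) = (\<Sum>m'\<in>Pset d p. \<Sum>T\<in>Pow m. if T \<subseteq> m' then t ^ card T else 0)"
    by (simp add: e1)
  also have "\<dots> = (\<Sum>T\<in>Pow m. \<Sum>m'\<in>Pset d p. if T \<subseteq> m' then t ^ card T else 0)"
    by (rule sum.swap)
  also have "\<dots> = (\<Sum>T\<in>Pow m. t ^ card T * real (card {m'\<in>Pset d p. T \<subseteq> m'}))"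
    by (intro sum.cong refl) (simp add: sum.inter_filter[OF Pset_finite, symmetric])
  also have "\<dots> \<le> (\<Sum>T\<in>Pow m. (t * p / d) ^ card T * real (d choose p))"
  proof (rule sum_mono)
    fix T assume T: "T \<in> Pow m"
    have Tf: "finite T" using T mfin by (auto intro: finite_subset)
    have Tk: "card T \<le> p" using T mfin mc by (metis PowD card_mono)
    have "real (card {m'\<in>Pset d p. T \<subseteq> m'}) \<le> real ((d - card T) choose (p - card T))"
      using K1[of T d "card T" p] T msub Tk by auto
    also have "\<dots> \<le> real p ^ card T * real (d choose p) / real d ^ card T"
      using K2[OF Tk p(2)] dpos by (simp add: field_simps)
    finally have "t ^ card T * real (card {m'\<in>Pset d p. T \<subseteq> m'}) \<le> t ^ card T * (real p ^ card T * real (d choose p) / real d ^ card T)"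
      using t by (intro mult_left_mono) auto
    also have "\<dots> = (t * p / d) ^ card T * real (d choose p)"
      by (simp add: power_mult_distrib power_divide)
    finally show "t ^ card T * real (card {m'\<in>Pset d p. T \<subseteq> m'}) \<le> (t * p / d) ^ card T * real (d choose p)" .
  qed
  also have "\<dots> = real (d choose p) * (\<Sum>T\<in>Pow m. (\<Prod>j\<in>T. t * p / d) * (\<Prod>j\<in>m-T. 1))"
    by (simp add: sum_distrib_left mult.commute)
  also have "(\<Sum>T\<in>Pow m. (\<Prod>j\<in>T. t * p / d) * (\<Prod>j\<in>m-T. 1)) = (\<Prod>j\<in>m. t * p / d + 1)"
    by (rule prod_add[OF mfin, symmetric])
  also have "\<dots> = (1 + t * p / d) ^ p" using mc by (simp add: add.commute)
  finally show ?thesis .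
qed

definition uu :: "nat set \<times> (nat \<Rightarrow> real) \<Rightarrow> nat \<Rightarrow> real" where
  "uu w j = (if j \<in> fst w then snd w j else 0)"

lemma Sset_Sigma: "Sset d p = Sigma (Pset d p) (\<lambda>m. PiE m (\<lambda>_. {-1, 1::real}))"
  by (auto simp: Sset_def Pset_def)

lemma card_Sset: "card (Sset d p) = (d choose p) * 2 ^ p"
proof -
  have "card (Sset d p) = (\<Sum>m\<in>Pset d p. card (PiE m (\<lambda>_. {-1, 1::real})))"
    unfolding Sset_Sigma by (rule card_SigmaI[OF Pset_finite]) (auto simp: Pset_def intro!: finite_PiE intro: finite_subset)
  also have "\<dots> = (\<Sum>m\<in>Pset d p. 2 ^ p)"
  proof (rule sum.cong[OF refl])
    fix m assume "m \<in> Pset d p"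
    hence "finite m" "card m = p" by (auto simp: Pset_def intro: finite_subset)
    thus "card (PiE m (\<lambda>_. {-1, 1::real})) = 2 ^ p" by (simp add: card_PiE numeral_2_eq_2)
  qed
  also have "\<dots> = (d choose p) * 2 ^ p" by (simp add: card_Pset)
  finally show ?thesis .
qed

lemma t_nonneg: "(exp a + exp (-a)) / 2 - 1 \<ge> (0::real)"
proof -
  have "exp a + exp (-a) \<ge> 2" using exp_ge_add_one_self[of a] exp_ge_add_one_self[of "-a"] by linarith
  thus ?thesis by simp
qed

lemma prod_if_card: "finite A \<Longrightarrow> (\<Prod>j\<in>A. (if j \<in> B then c else 1)) = c ^ card (A \<inter> B)"
proof -
  assume A: "finite A"
  have "(\<Prod>j\<in>A. (if j \<in> B then c else 1)) = (\<Prod>j\<in>{j\<in>A. j \<in> B}. c)"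
    by (rule prod.inter_filter[OF A, symmetric])
  also have "{j\<in>A. j \<in> B} = A \<inter> B" by auto
  finally show ?thesis by simp
qed

lemma K5:
  assumes w: "w \<in> Sset d p" and p: "1 \<le> p" "p \<le> d"
  shows "(\<Sum>w'\<in>Sset d p. exp (a * (\<Sum>j\<in>{1..d}. uu w j * uu w' j)))
     \<le> real (card (Sset d p)) * (1 + ((exp a + exp (-a)) / 2 - 1) * p / d) ^ p"
proof -
  define t where "t = (exp a + exp (-a)) / 2 - 1"
  obtain m \<epsilon> where w': "w = (m, \<epsilon>)" by (cases w)
  have mP: "m \<in> Pset d p" and eps: "\<epsilon> \<in> PiE m (\<lambda>_. {-1, 1::real})"
    using w unfolding w' Sset_Sigma by auto
  have inner: "(\<Sum>\<epsilon>'\<in>PiE m' (\<lambda>_. {-1, 1::real}). exp (a * (\<Sum>j\<in>{1..d}. uu w j * uu (m', \<epsilon>') j)))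
      = 2 ^ p * (\<Prod>j\<in>m. (if j \<in> m' then 1 + t else 1))" if m': "m' \<in> Pset d p" for m'
  proof -
    have m'f: "finite m'" and m's: "m' \<subseteq> {1..d}" and m'c: "card m' = p"
      using m' by (auto simp: Pset_def intro: finite_subset)
    have "(\<Sum>\<epsilon>'\<in>PiE m' (\<lambda>_. {-1, 1::real}). exp (a * (\<Sum>j\<in>{1..d}. uu w j * uu (m', \<epsilon>') j)))
        = (\<Sum>\<epsilon>'\<in>PiE m' (\<lambda>_. {-1, 1::real}). \<Prod>j\<in>m'. exp (a * uu w j * \<epsilon>' j))"
    proof (rule sum.cong[OF refl])
      fix \<epsilon>' assume "\<epsilon>' \<in> PiE m' (\<lambda>_. {-1, 1::real})"
      have "(\<Sum>j\<in>{1..d}. uu w j * uu (m', \<epsilon>') j) = (\<Sum>j\<in>m'. uu w j * uu (m', \<epsilon>') j)"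
        by (rule sum.mono_neutral_right) (use m's in \<open>auto simp: uu_def\<close>)
      also have "\<dots> = (\<Sum>j\<in>m'. uu w j * \<epsilon>' j)" by (intro sum.cong) (auto simp: uu_def)
      finally show "exp (a * (\<Sum>j\<in>{1..d}. uu w j * uu (m', \<epsilon>') j)) = (\<Prod>j\<in>m'. exp (a * uu w j * \<epsilon>' j))"
        by (simp add: sum_distrib_left exp_sum[OF m'f, symmetric] mult.assoc)
    qed
    also have "\<dots> = (\<Prod>j\<in>m'. \<Sum>e\<in>{-1, 1::real}. exp (a * uu w j * e))"
      by (rule prod_sum_PiE[symmetric]) (use m'f in auto)
    also have "\<dots> = (\<Prod>j\<in>m'. 2 * (if j \<in> m then 1 + t else 1))"
    proof (rule prod.cong[OF refl])
      fix j assume "j \<in> m'"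
      show "(\<Sum>e\<in>{-1, 1::real}. exp (a * uu w j * e)) = 2 * (if j \<in> m then 1 + t else 1)"
      proof (cases "j \<in> m")
        case True
        hence "\<epsilon> j \<in> {-1, 1}" using eps by auto
        thus ?thesis using True by (auto simp: uu_def w' t_def)
      qed (simp add: uu_def w')
    qed
    also have "\<dots> = 2 ^ p * (\<Prod>j\<in>m'. (if j \<in> m then 1 + t else 1))"
      using m'c by (simp add: prod.distrib)
    also have "(\<Prod>j\<in>m'. (if j \<in> m then 1 + t else 1)) = (\<Prod>j\<in>m. (if j \<in> m' then 1 + t else 1))"
    proof -
      have mf: "finite m" using mP by (auto simp: Pset_def intro: finite_subset)
      thus ?thesis using m'f by (simp add: prod_if_card Int_commute)
    qed
    finally show ?thesis .
  qed
  have "(\<Sum>w'\<in>Sset d p. exp (a * (\<Sum>j\<in>{1..d}. uu w j * uu w' j)))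
      = (\<Sum>m'\<in>Pset d p. \<Sum>\<epsilon>'\<in>PiE m' (\<lambda>_. {-1, 1::real}). exp (a * (\<Sum>j\<in>{1..d}. uu w j * uu (m', \<epsilon>') j)))"
    unfolding Sset_Sigma by (subst sum.Sigma) (auto simp: Pset_finite Pset_def intro!: finite_PiE intro: finite_subset)
  also have "\<dots> = (\<Sum>m'\<in>Pset d p. 2 ^ p * (\<Prod>j\<in>m. (if j \<in> m' then 1 + t else 1)))"
    by (intro sum.cong refl inner)
  also have "\<dots> = 2 ^ p * (\<Sum>m'\<in>Pset d p. \<Prod>j\<in>m. (if j \<in> m' then 1 + t else 1))"
    by (simp add: sum_distrib_left)
  also have "\<dots> \<le> 2 ^ p * (real (d choose p) * (1 + t * p / d)^p)"
  proof -
    have t0: "t \<ge> 0" unfolding t_def by (rule t_nonneg)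
    show ?thesis using K3[OF mP t0 p] by (intro mult_left_mono) auto
  qed
  also have "\<dots> = real (card (Sset d p)) * (1 + t * p / d) ^ p"
    by (simp add: card_Sset)
  finally show ?thesis by (simp add: t_def)
qed



lemma Q_lower:
  assumes ne: "Sset d p \<noteq> {}" and h: "hh n \<tau> \<ge> 0"
  shows "1 \<le> (\<Sum>w\<in>Sset d p. \<Sum>w'\<in>Sset d p. exp (hh n \<tau> * (\<Sum>j\<in>{1..d}. Dv p r w j * Dv p r w' j))) / (real (card (Sset d p)))^2"
proof -
  let ?S = "Sset d p"
  have cpos: "real (card ?S) > 0" using ne Sset_finite by (simp add: card_gt_0_iff)
  have "(\<Sum>w\<in>?S. \<Sum>w'\<in>?S. exp (hh n \<tau> * (\<Sum>j\<in>{1..d}. Dv p r w j * Dv p r w' j)))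
      \<ge> (\<Sum>w\<in>?S. \<Sum>w'\<in>?S. 1 + hh n \<tau> * (\<Sum>j\<in>{1..d}. Dv p r w j * Dv p r w' j))"
    by (intro sum_mono exp_ge_add_one_self)
  also have "(\<Sum>w\<in>?S. \<Sum>w'\<in>?S. 1 + hh n \<tau> * (\<Sum>j\<in>{1..d}. Dv p r w j * Dv p r w' j))
      = (real (card ?S))^2 + hh n \<tau> * (\<Sum>j\<in>{1..d}. (\<Sum>w\<in>?S. Dv p r w j)^2)"
  proof -
    have "(\<Sum>w\<in>?S. \<Sum>w'\<in>?S. (\<Sum>j\<in>{1..d}. Dv p r w j * Dv p r w' j)) = (\<Sum>j\<in>{1..d}. (\<Sum>w\<in>?S. Dv p r w j)^2)"
    proof -
      have "(\<Sum>w\<in>?S. \<Sum>w'\<in>?S. (\<Sum>j\<in>{1..d}. Dv p r w j * Dv p r w' j)) = (\<Sum>w\<in>?S. \<Sum>j\<in>{1..d}. \<Sum>w'\<in>?S. Dv p r w j * Dv p r w' j)"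
        by (intro sum.cong refl sum.swap)
      also have "\<dots> = (\<Sum>j\<in>{1..d}. \<Sum>w\<in>?S. \<Sum>w'\<in>?S. Dv p r w j * Dv p r w' j)"
        by (rule sum.swap)
      also have "\<dots> = (\<Sum>j\<in>{1..d}. (\<Sum>w\<in>?S. Dv p r w j)^2)"
        by (simp add: power2_eq_square sum_product)
      finally show ?thesis .
    qed
    thus ?thesis by (simp add: sum.distrib sum_distrib_left[symmetric] power2_eq_square)
  qed
  also have "\<dots> \<ge> (real (card ?S))^2"
    using h by (simp add: sum_nonneg)
  finally show ?thesis using cpos by simp
qed

lemma Dv_uu: "Dv p r w j = r / sqrt (real p) * uu w j"
  by (simp add: Dv_def uu_def)

lemma Q_upper:
  fixes r :: real and n \<tau> d p :: nat
  assumes p: "1 \<le> p" "p \<le> d"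
  defines "a \<equiv> hh n \<tau> * r^2 / real p"
  shows "(\<Sum>w\<in>Sset d p. \<Sum>w'\<in>Sset d p. exp (hh n \<tau> * (\<Sum>j\<in>{1..d}. Dv p r w j * Dv p r w' j))) / (real (card (Sset d p)))^2
     \<le> (1 + ((exp a + exp (-a)) / 2 - 1) * p / d) ^ p"
proof -
  let ?S = "Sset d p"
  let ?B = "(1 + ((exp a + exp (-a)) / 2 - 1) * p / d) ^ p"
  have ne: "?S \<noteq> {}"
  proof -
    have "({1..p}, restrict (\<lambda>_. 1) {1..p}) \<in> ?S" using p by (auto simp: Sset_def)
    thus ?thesis by auto
  qed
  have cpos: "real (card ?S) > 0" using ne Sset_finite by (simp add: card_gt_0_iff)
  have eq: "hh n \<tau> * (\<Sum>j\<in>{1..d}. Dv p r w j * Dv p r w' j) = a * (\<Sum>j\<in>{1..d}. uu w j * uu w' j)" for w w'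
  proof -
    have "(r / sqrt (real p))^2 = r^2 / real p" using p by (simp add: power_divide)
    thus ?thesis unfolding a_def Dv_uu
      by (simp add: sum_distrib_left power2_eq_square algebra_simps)
  qed
  have "(\<Sum>w\<in>?S. \<Sum>w'\<in>?S. exp (hh n \<tau> * (\<Sum>j\<in>{1..d}. Dv p r w j * Dv p r w' j)))
      = (\<Sum>w\<in>?S. \<Sum>w'\<in>?S. exp (a * (\<Sum>j\<in>{1..d}. uu w j * uu w' j)))" by (intro sum.cong refl) (simp only: eq)
  also have "\<dots> \<le> (\<Sum>w\<in>?S. real (card ?S) * ?B)"
    by (rule sum_mono) (rule K5[OF _ p])
  also have "\<dots> = (real (card ?S))^2 * ?B" by (simp add: power2_eq_square)
  finally show ?thesis using cpos by (simp add: divide_le_eq mult.commute)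
qed

lemma t_bound:
  assumes "0 \<le> a" "a \<le> 1"
  shows "(exp a + exp (-a)) / 2 - 1 \<le> (a::real)^2"
proof -
  have e1: "exp a \<le> 1 + a + a^2" by (rule exp_bound) fact+
  have "exp (-a) * (1 + a) \<le> exp (-a) * exp a"
    using exp_ge_add_one_self[of a] by (intro mult_left_mono) auto
  also have "\<dots> = 1" by (simp add: mult_exp_exp)
  finally have "exp (-a) * (1 + a) \<le> 1" .
  hence "exp (-a) \<le> 1 / (1 + a)" using assms by (simp add: field_simps)
  also have "\<dots> \<le> 1 - a + a^2"
    using assms by (simp add: field_simps power2_eq_square)
  finally have "exp (-a) \<le> 1 - a + a^2" .
  hence "exp a + exp (-a) \<le> 2 + 2 * a^2" using e1 by linarith
  thus ?thesis by (simp add: field_simps)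
qed

lemma pow_exp_bound:
  assumes "x \<ge> 0"
  shows "(1 + x) ^ p \<le> exp (real p * (x::real))"
proof -
  have "(1 + x) ^ p \<le> exp x ^ p" using assms by (intro power_mono) auto
  thus ?thesis by (simp add: exp_of_nat_mult)
qed



lemma hh_nonneg: "hh n \<tau> \<ge> 0" by (simp add: hh_def)

lemma pointwise:
  assumes p: "1 \<le> p" "p \<le> d" and a1: "hh n \<tau> * r^2 / real p \<le> 1"
  defines "Q \<equiv> (\<Sum>w\<in>Sset d p. \<Sum>w'\<in>Sset d p. exp (hh n \<tau> * (\<Sum>j\<in>{1..d}. Dv p r w j * Dv p r w' j))) / (real (card (Sset d p)))^2"
  shows "1 \<le> Q \<and> Q \<le> exp ((hh n \<tau> * r^2)^2 / real d)"
proof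
  have ne: "Sset d p \<noteq> {}"
  proof -
    have "({1..p}, restrict (\<lambda>_. 1) {1..p}) \<in> Sset d p" using p by (auto simp: Sset_def)
    thus ?thesis by auto
  qed
  show "1 \<le> Q" unfolding Q_def by (rule Q_lower[OF ne hh_nonneg])
  define a where "a = hh n \<tau> * r^2 / real p"
  define t where "t = (exp a + exp (-a)) / 2 - 1"
  have a0: "0 \<le> a" unfolding a_def using hh_nonneg by simp
  have t0: "0 \<le> t" unfolding t_def by (rule t_nonneg)
  have ta: "t \<le> a^2" unfolding t_def by (rule t_bound[OF a0]) (use a1 in \<open>simp add: a_def\<close>)
  have dpos: "real d > 0" "real p > 0" using p by auto
  have "Q \<le> (1 + t * p / d) ^ p" unfolding Q_def t_def a_def by (rule Q_upper[OF p])
  also have "\<dots> \<le> exp (real p * (t * p / d))" by (rule pow_exp_bound) (use t0 dpos in simp)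
  also have "\<dots> \<le> exp (real p * (a^2 * p / d))"
    using ta dpos by (simp add: mult_left_mono divide_right_mono)
  also have "real p * (a^2 * p / d) = (hh n \<tau> * r^2)^2 / real d"
    using dpos by (simp add: a_def power_divide field_simps power2_eq_square)
  finally show "Q \<le> exp ((hh n \<tau> * r^2)^2 / real d)" .
qed

lemma hh_hfun:
  assumes "\<tau> \<le> n" "n > 0"
  shows "hh n \<tau> * r^2 = r^2 * real n * hfun n \<tau>"
  using assms by (simp add: hh_def hfun_def of_nat_diff field_simps)

theorem mainTheorem10:
  fixes \<beta> :: real
    and n \<tau> p :: "nat \<Rightarrow> nat"
    and r :: "nat \<Rightarrow> real"
    and \<theta> :: "nat \<Rightarrow> nat \<Rightarrow> real"
  assumes \<beta>: "0 < \<beta>" "\<beta> \<le> 1/2"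
    and n: "\<And>d. n d \<ge> 2"
    and \<tau>: "\<And>d. 1 \<le> \<tau> d \<and> \<tau> d \<le> n d - 1"
    and p: "\<exists>c>0. \<exists>C>0. \<forall>\<^sub>F d in sequentially.
              c * real d powr (1 - \<beta>) \<le> real (p d) \<and> real (p d) \<le> C * real d powr (1 - \<beta>)"
    and lim: "(\<lambda>d. (r d)\<^sup>2 * real (n d) * hfun (n d) (\<tau> d) / sqrt (real d)) \<longlonglongrightarrow> 0"
  shows "(\<lambda>d. chi2_moment d (n d) (\<tau> d) (\<theta> d) (p d) (r d)) \<longlonglongrightarrow> 1"
proof -
  obtain c C where c: "c > 0" "C > 0" and evp: "\<forall>\<^sub>F d in sequentially.
              c * real d powr (1 - \<beta>) \<le> real (p d) \<and> real (p d) \<le> C * real d powr (1 - \<beta>)"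
    using p by blast
  define ell where "ell d = (r d)\<^sup>2 * real (n d) * hfun (n d) (\<tau> d) / sqrt (real d)" for d
  have tn: "\<tau> d < n d" "1 \<le> \<tau> d" for d using \<tau>[of d] n[of d] by auto
  have hhl: "hh (n d) (\<tau> d) * (r d)^2 = ell d * sqrt (real d)" if "d \<ge> 1" for d
    using hh_hfun[of "\<tau> d" "n d" "r d"] tn[of d] that by (simp add: ell_def)
  have l0: "ell d \<ge> 0" if "d \<ge> 1" for d
  proof -
    have "ell d * sqrt (real d) \<ge> 0" using hhl[OF that] hh_nonneg[of "n d" "\<tau> d"] by (metis mult_nonneg_nonneg zero_le_power2)
    thus ?thesis using that by (simp add: zero_le_mult_iff)
  qed
  have ev1: "\<forall>\<^sub>F d in sequentially. (1::nat) \<le> d" by (rule eventually_ge_at_top)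
  have ev2: "\<forall>\<^sub>F d in sequentially. C \<le> real d powr \<beta>"
  proof -
    have "\<forall>\<^sub>F d in sequentially. nat \<lceil>C powr (1/\<beta>)\<rceil> \<le> d" by (rule eventually_ge_at_top)
    thus ?thesis
    proof (rule eventually_mono)
      fix d assume d: "nat \<lceil>C powr (1/\<beta>)\<rceil> \<le> d"
      hence "C powr (1/\<beta>) \<le> real d" by linarith
      hence "(C powr (1/\<beta>)) powr \<beta> \<le> real d powr \<beta>"
        using \<beta> by (intro powr_mono2) auto
      also have "(C powr (1/\<beta>)) powr \<beta> = C" using \<beta> c by (simp add: powr_powr)
      finally show "C \<le> real d powr \<beta>" .
    qed
  qed
  have ev3: "\<forall>\<^sub>F d in sequentially. ell d < c"
    using order_tendstoD(2)[OF lim[folded ell_def] c(1)] .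
  define Q where "Q d = (\<Sum>w\<in>Sset d (p d). \<Sum>w'\<in>Sset d (p d). exp (hh (n d) (\<tau> d) * (\<Sum>j\<in>{1..d}. Dv (p d) (r d) w j * Dv (p d) (r d) w' j))) / (real (card (Sset d (p d))))^2" for d
  have evm: "\<forall>\<^sub>F d in sequentially. 1 \<le> Q d \<and> Q d \<le> exp ((ell d)^2) \<and> chi2_moment d (n d) (\<tau> d) (\<theta> d) (p d) (r d) = ennreal (Q d)"
    using evp ev1 ev2 ev3
  proof eventually_elim
    case (elim d)
    have d1: "real d \<ge> 1" using elim by simp
    have sq: "sqrt (real d) > 0" using d1 by simp
    have "real d powr (1/2) \<le> real d powr (1 - \<beta>)" using \<beta> d1 by (intro powr_mono) auto
    hence "sqrt (real d) \<le> real d powr (1 - \<beta>)" using powr_half_sqrt[of "real d"] by simp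
    hence pc: "c * sqrt (real d) \<le> real (p d)" using elim c by (meson mult_left_mono less_imp_le order_trans)
    hence ppos: "real (p d) > 0" using c sq by (meson mult_pos_pos order_less_le_trans)
    hence p1: "1 \<le> p d" by simp
    have "real d powr (1 - \<beta>) = real d / real d powr \<beta>" using d1 by (simp add: powr_diff)
    hence "real (p d) \<le> C * real d / real d powr \<beta>" using elim by simp
    also have "\<dots> \<le> real d" using elim d1 by (simp add: divide_le_eq mult_right_mono)
    finally have pd: "p d \<le> d" by simp
    have a1: "hh (n d) (\<tau> d) * (r d)^2 / real (p d) \<le> 1"
    proof -
      have "hh (n d) (\<tau> d) * (r d)^2 / real (p d) = ell d * sqrt (real d) / real (p d)" using hhl elim by simp
      also have "\<dots> \<le> ell d * sqrt (real d) / (c * sqrt (real d))"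
        using pc l0[of d] elim sq c ppos by (intro divide_left_mono mult_nonneg_nonneg mult_pos_pos) auto
      also have "\<dots> = ell d / c" using sq by simp
      also have "\<dots> \<le> 1" using elim c by simp
      finally show ?thesis .
    qed
    have pw: "1 \<le> Q d \<and> Q d \<le> exp ((hh (n d) (\<tau> d) * (r d)^2)^2 / real d)"
      unfolding Q_def by (rule pointwise[OF p1 pd a1])
    have "(hh (n d) (\<tau> d) * (r d)^2)^2 / real d = (ell d)^2"
      using hhl[of d] elim d1 by (simp add: power_mult_distrib)
    moreover have "Sset d (p d) \<noteq> {}"
    proof -
      have "({1..p d}, restrict (\<lambda>_. 1) {1..p d}) \<in> Sset d (p d)" using pd by (auto simp: Sset_def)
      thus ?thesis by auto
    qed
    ultimately show ?case using pw chi2_formula[OF tn(2) tn(1)] by (simp add: Q_def)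
  qed
  have "(\<lambda>d. exp ((ell d)^2)) \<longlonglongrightarrow> exp (0^2)"
    by (intro tendsto_intros lim[folded ell_def])
  hence up: "(\<lambda>d. exp ((ell d)^2)) \<longlonglongrightarrow> 1" by simp
  have "Q \<longlonglongrightarrow> 1"
    by (rule tendsto_sandwich[of "\<lambda>_. 1" Q _ "\<lambda>d. exp ((ell d)^2)"])
       (use evm up in \<open>auto elim: eventually_mono\<close>)
  hence "(\<lambda>d. ennreal (Q d)) \<longlonglongrightarrow> ennreal 1" by (rule tendsto_ennrealI)
  hence L1: "(\<lambda>d. ennreal (Q d)) \<longlonglongrightarrow> 1" by simp
  have E1: "\<forall>\<^sub>F d in sequentially. ennreal (Q d) = chi2_moment d (n d) (\<tau> d) (\<theta> d) (p d) (r d)"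
    using evm by (auto elim: eventually_mono)
  show ?thesis by (rule iffD1[OF tendsto_cong[OF E1] L1])
qed

end
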